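(* Let $X$ be a finite set with $|X|\ge 3$ and $T\in B(X)$. (M1) If $\mathcal T$ is a minimal triplet cover for $T$, then $2\le\mu(\mathcal T)\le 5$. (M2) If $\mathcal T$ is a minimum triplet cover for $T$, then $2\le\mu(\mathcal T)\le 3$.
   Context: A binary phylogenetic $X$-tree is an unrooted tree whose leaf set is $X$ and all of whose non-leaf vertices are unlabelled of degree three; $B(X)$ is the set of such trees. Pairs in $\binom{X}{2}$ are written $ab$, triples $abc$. Given $\mathcal T\subseteq\binom{X}{2}$, a triple $abc$ supports an interior vertex $v$ if $a,b,c$ lie one in each of the three components of $T$ minus $v$ and $ab,ac,bc\in\mathcal T$; $\mathcal T$ is a triplet cover for $T$ if every interior vertex is supported by some triple. A triplet cover is minimal if removing any single pair from it yields a set that is not a triplet cover for $T$, and minimum if no triplet cover for $T$ has smaller cardinality. The multiplicity $\mu_{\mathcal T}(x)$ of $x\in X$ is the number of elements of $\mathcal T$ containing $x$, and $\mu(\mathcal T)=\min\{\mu_{\mathcal T}(x):x\in X\}$. *)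

theory Defs
  imports Main
begin

definition adj_avoid :: "'v set set \<Rightarrow> 'v set \<Rightarrow> ('v \<times> 'v) set" where
  "adj_avoid E W = {(x, y). {x, y} \<in> E \<and> x \<notin> W \<and> y \<notin> W}"

definition connected_avoid :: "'v set set \<Rightarrow> 'v set \<Rightarrow> 'v \<Rightarrow> 'v \<Rightarrow> bool" where
  "connected_avoid E W x y \<longleftrightarrow> (x, y) \<in> (adj_avoid E W)\<^sup>*"

definition degree :: "'v set set \<Rightarrow> 'v \<Rightarrow> nat" where
  "degree E v = card {e \<in> E. v \<in> e}"

text \<open>A finite tree: connected, and acyclic (every edge is a bridge).\<close>
definition is_tree :: "'v set \<Rightarrow> 'v set set \<Rightarrow> bool" where
  "is_tree V E \<longleftrightarrow> finite V \<and> V \<noteq> {}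
     \<and> (\<forall>e\<in>E. \<exists>a b. e = {a, b} \<and> a \<noteq> b \<and> a \<in> V \<and> b \<in> V)
     \<and> (\<forall>x\<in>V. \<forall>y\<in>V. (x, y) \<in> {(a, b). {a, b} \<in> E}\<^sup>*)
     \<and> (\<forall>e\<in>E. \<forall>a b. e = {a, b} \<longrightarrow> (a, b) \<notin> {(u, w). {u, w} \<in> E - {e}}\<^sup>*)"

definition binary_phylo_tree :: "'v set \<Rightarrow> 'v set \<Rightarrow> 'v set set \<Rightarrow> bool" where
  "binary_phylo_tree X V E \<longleftrightarrow> is_tree V E \<and> X \<subseteq> V
     \<and> (\<forall>v\<in>V. v \<in> X \<longleftrightarrow> degree E v = 1)
     \<and> (\<forall>v\<in>V - X. degree E v = 3)"

definition interior :: "'v set \<Rightarrow> 'v set \<Rightarrow> 'v set" where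
  "interior X V = V - X"

definition pairs :: "'v set \<Rightarrow> 'v set set" where
  "pairs X = {p. p \<subseteq> X \<and> card p = 2}"

text \<open>The triple abc supports the interior vertex v: a,b,c lie in pairwise distinct
  components of T - v (hence one in each of the three components), and ab,ac,bc are in the set.\<close>
definition supports :: "'v set set \<Rightarrow> 'v set set \<Rightarrow> 'v \<Rightarrow> 'v \<Rightarrow> 'v \<Rightarrow> 'v \<Rightarrow> bool" where
  "supports E \<T> v a b c \<longleftrightarrow>
     a \<noteq> v \<and> b \<noteq> v \<and> c \<noteq> v
     \<and> \<not> connected_avoid E {v} a b \<and> \<not> connected_avoid E {v} a c \<and> \<not> connected_avoid E {v} b c
     \<and> {a, b} \<in> \<T> \<and> {a, c} \<in> \<T> \<and> {b, c} \<in> \<T>"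

definition triplet_cover :: "'v set \<Rightarrow> 'v set \<Rightarrow> 'v set set \<Rightarrow> 'v set set \<Rightarrow> bool" where
  "triplet_cover X V E \<T> \<longleftrightarrow> \<T> \<subseteq> pairs X
     \<and> (\<forall>v\<in>interior X V. \<exists>a\<in>X. \<exists>b\<in>X. \<exists>c\<in>X. supports E \<T> v a b c)"

definition minimal_triplet_cover :: "'v set \<Rightarrow> 'v set \<Rightarrow> 'v set set \<Rightarrow> 'v set set \<Rightarrow> bool" where
  "minimal_triplet_cover X V E \<T> \<longleftrightarrow> triplet_cover X V E \<T>
     \<and> (\<forall>p\<in>\<T>. \<not> triplet_cover X V E (\<T> - {p}))"

definition minimum_triplet_cover :: "'v set \<Rightarrow> 'v set \<Rightarrow> 'v set set \<Rightarrow> 'v set set \<Rightarrow> bool" where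
  "minimum_triplet_cover X V E \<T> \<longleftrightarrow> triplet_cover X V E \<T>
     \<and> (\<forall>\<T>'. triplet_cover X V E \<T>' \<longrightarrow> card \<T> \<le> card \<T>')"

definition multiplicity :: "'v set set \<Rightarrow> 'v \<Rightarrow> nat" where
  "multiplicity \<T> x = card {p \<in> \<T>. x \<in> p}"

definition min_multiplicity :: "'v set \<Rightarrow> 'v set set \<Rightarrow> nat" where
  "min_multiplicity X \<T> = Min ((multiplicity \<T>) ` X)"

end

theory Submission imports Defs begin

abbreviation erel :: "'v set set \<Rightarrow> ('v \<times> 'v) set" where
  "erel F \<equiv> {(a, b). {a, b} \<in> F}"

lemma erel_sym: "sym (erel F)"
  by (auto simp: sym_def insert_commute)

lemma erel_rt_sym: "(x, y) \<in> (erel F)\<^sup>* \<Longrightarrow> (y, x) \<in> (erel F)\<^sup>*"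
  using sym_rtrancl[OF erel_sym[of F]] by (auto simp: sym_def)

lemma erel_mono: "F \<subseteq> G \<Longrightarrow> (x, y) \<in> (erel F)\<^sup>* \<Longrightarrow> (x, y) \<in> (erel G)\<^sup>*"
proof -
  assume "F \<subseteq> G" "(x, y) \<in> (erel F)\<^sup>*"
  moreover have "erel F \<subseteq> erel G" using \<open>F \<subseteq> G\<close> by auto
  ultimately show ?thesis using rtrancl_mono by blast
qed

lemma avoid_sym: "sym (adj_avoid E W)"
  by (auto simp: sym_def adj_avoid_def insert_commute)

lemma avoid_rt_sym: "(x, y) \<in> (adj_avoid E W)\<^sup>* \<Longrightarrow> (y, x) \<in> (adj_avoid E W)\<^sup>*"
  using sym_rtrancl[OF avoid_sym[of E W]] by (auto simp: sym_def)

lemma avoid_sub: "v \<in> e \<Longrightarrow> (x, y) \<in> (adj_avoid E {v})\<^sup>* \<Longrightarrow> (x, y) \<in> (erel (E - {e}))\<^sup>*"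
proof -
  assume "v \<in> e" "(x, y) \<in> (adj_avoid E {v})\<^sup>*"
  moreover have "adj_avoid E {v} \<subseteq> erel (E - {e})" using \<open>v \<in> e\<close>
    by (auto simp: adj_avoid_def)
  ultimately show ?thesis using rtrancl_mono by blast
qed

lemma split_path:
  assumes "(x, y) \<in> (erel F)\<^sup>*"
  shows "(x, y) \<in> (erel (F - {{a, b}}))\<^sup>*
    \<or> ((x, a) \<in> (erel (F - {{a, b}}))\<^sup>* \<and> (b, y) \<in> (erel (F - {{a, b}}))\<^sup>*)
    \<or> ((x, b) \<in> (erel (F - {{a, b}}))\<^sup>* \<and> (a, y) \<in> (erel (F - {{a, b}}))\<^sup>*)"
  using assms
proof (induction rule: rtrancl_induct)
  case base
  then show ?case by simp
next
  case (step z w)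
  let ?R = "(erel (F - {{a, b}}))\<^sup>*"
  show ?case
  proof (cases "{z, w} = {a, b}")
    case False
    then have zw: "(z, w) \<in> ?R" using step.hyps(2) by auto
    from step.IH show ?thesis
    proof (elim disjE conjE)
      assume "(x, z) \<in> ?R" then show ?thesis using zw by (meson rtrancl_trans)
    next
      assume "(x, a) \<in> ?R" "(b, z) \<in> ?R" then show ?thesis using zw by (meson rtrancl_trans)
    next
      assume "(x, b) \<in> ?R" "(a, z) \<in> ?R" then show ?thesis using zw by (meson rtrancl_trans)
    qed
  next
    case True
    then have "(z = a \<and> w = b) \<or> (z = b \<and> w = a)" by (auto simp: doubleton_eq_iff)
    then show ?thesis using step.IH by (elim disjE conjE) auto
  qed
qed

lemma tree_edge: "is_tree V E \<Longrightarrow> e \<in> E \<Longrightarrow> \<exists>a b. e = {a, b} \<and> a \<noteq> b \<and> a \<in> V \<and> b \<in> V"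
  unfolding is_tree_def by blast

lemma tree_conn: "is_tree V E \<Longrightarrow> x \<in> V \<Longrightarrow> y \<in> V \<Longrightarrow> (x, y) \<in> (erel E)\<^sup>*"
  unfolding is_tree_def by blast

lemma tree_bridge: "is_tree V E \<Longrightarrow> {a, b} \<in> E \<Longrightarrow> (a, b) \<notin> (erel (E - {{a, b}}))\<^sup>*"
  unfolding is_tree_def by blast

lemma tree_finE: "is_tree V E \<Longrightarrow> finite E"
proof -
  assume t: "is_tree V E"
  have "E \<subseteq> Pow V" using tree_edge[OF t] by blast
  moreover have "finite V" using t unfolding is_tree_def by blast
  ultimately show ?thesis by (meson finite_Pow_iff finite_subset)
qed

lemma edge_count:
  assumes t: "is_tree V E"
  shows "card E + 1 \<le> card V"
proof -
  have finV: "finite V" and ne: "V \<noteq> {}" using t unfolding is_tree_def by blast+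
  obtain r where r: "r \<in> V" using ne by blast
  define f where "f e = (SOME a. a \<in> e \<and> (a, r) \<notin> (erel (E - {e}))\<^sup>*)" for e
  have f: "f e \<in> e \<and> (f e, r) \<notin> (erel (E - {e}))\<^sup>*" if e: "e \<in> E" for e
  proof -
    obtain a b where ab: "e = {a, b}" "a \<noteq> b" "a \<in> V" "b \<in> V" using tree_edge[OF t e] by blast
    have br: "(a, b) \<notin> (erel (E - {e}))\<^sup>*" using tree_bridge[OF t] e ab by blast
    have "\<exists>a. a \<in> e \<and> (a, r) \<notin> (erel (E - {e}))\<^sup>*"
    proof (rule ccontr)
      assume "\<not> ?thesis"
      then have "(a, r) \<in> (erel (E - {e}))\<^sup>*" "(b, r) \<in> (erel (E - {e}))\<^sup>*" using ab by auto
      then have "(a, b) \<in> (erel (E - {e}))\<^sup>*" using erel_rt_sym[of b r] rtrancl_trans[of a r _ b] by blast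
      then show False using br by blast
    qed
    then show ?thesis unfolding f_def by (rule someI_ex)
  qed
  have fV: "f e \<in> V - {r}" if e: "e \<in> E" for e
  proof -
    have "f e \<in> e" using f[OF e] by blast
    moreover have "e \<subseteq> V" using tree_edge[OF t e] by blast
    moreover have "f e \<noteq> r" using f[OF e] by blast
    ultimately show ?thesis by blast
  qed
  have inj: "inj_on f E"
  proof (rule inj_onI, rule ccontr)
    fix e e' assume e: "e \<in> E" and e': "e' \<in> E" and eq: "f e = f e'" and ne: "e \<noteq> e'"
    define a where "a = f e"
    have fe: "a \<in> e" "(a, r) \<notin> (erel (E - {e}))\<^sup>*" using f[OF e] a_def by auto
    have fe': "a \<in> e'" "(a, r) \<notin> (erel (E - {e'}))\<^sup>*" using f[OF e'] a_def eq by auto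
    obtain b where b: "e = {a, b}" using tree_edge[OF t e] fe(1) by blast
    obtain c where c: "e' = {a, c}" using tree_edge[OF t e'] fe'(1) by blast
    have brb: "(a, b) \<notin> (erel (E - {e}))\<^sup>*" using tree_bridge[OF t] e b by blast
    have "(a, r) \<in> (erel E)\<^sup>*" using tree_conn[OF t] r tree_edge[OF t e] fe(1) by blast
    from split_path[OF this, of a b] fe(2) brb b
    have br: "(b, r) \<in> (erel (E - {e}))\<^sup>*" by auto
    have sub1: "E - {e} - {e'} \<subseteq> E - {e'}" and sub2: "E - {e} - {e'} \<subseteq> E - {e}" by auto
    from split_path[OF br, of a c] c
    consider "(b, r) \<in> (erel (E - {e} - {e'}))\<^sup>*"
      | "(b, a) \<in> (erel (E - {e} - {e'}))\<^sup>*"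
      | "(a, r) \<in> (erel (E - {e} - {e'}))\<^sup>*"
      by auto
    then show False
    proof cases
      case 1
      then have "(b, r) \<in> (erel (E - {e'}))\<^sup>*" by (rule erel_mono[OF sub1])
      moreover have "(a, b) \<in> erel (E - {e'})" using e ne b by auto
      ultimately show False using fe'(2) by (meson converse_rtrancl_into_rtrancl)
    next
      case 2
      then have "(b, a) \<in> (erel (E - {e}))\<^sup>*" by (rule erel_mono[OF sub2])
      then have "(a, b) \<in> (erel (E - {e}))\<^sup>*" by (rule erel_rt_sym)
      then show False using brb by simp
    next
      case 3
      then have "(a, r) \<in> (erel (E - {e}))\<^sup>*" by (rule erel_mono[OF sub2])
      then show False using fe(2) by simp
    qed
  qed
  have "card E \<le> card (V - {r})"
  proof (rule card_inj_on_le[OF inj])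
    show "f ` E \<subseteq> V - {r}" using fV by blast
    show "finite (V - {r})" using finV by simp
  qed
  moreover have "card (V - {r}) = card V - 1" using r finV by simp
  moreover have "card V \<ge> 1" using r finV card_gt_0_iff[of V] by (auto simp: Suc_le_eq)
  ultimately show ?thesis by linarith
qed

lemma double_count:
  assumes "finite A" "finite B" "\<And>b. b \<in> B \<Longrightarrow> b \<subseteq> A \<and> card b = 2"
  shows "(\<Sum>a\<in>A. card {b\<in>B. a \<in> b}) = 2 * card B"
proof -
  have "(\<Sum>a\<in>A. card {b\<in>B. a \<in> b}) = (\<Sum>a\<in>A. \<Sum>b\<in>B. if a \<in> b then 1 else 0)"
    using assms(2) by (simp add: sum.inter_filter[symmetric])
  also have "\<dots> = (\<Sum>b\<in>B. \<Sum>a\<in>A. if a \<in> b then 1 else 0)" by (rule sum.swap)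
  also have "\<dots> = (\<Sum>b\<in>B. 2)"
  proof (rule sum.cong)
    fix b assume b: "b \<in> B"
    have "(\<Sum>a\<in>A. if a \<in> b then 1 else 0) = card {a\<in>A. a \<in> b}"
      using assms(1) by (simp add: sum.inter_filter[symmetric])
    also have "{a\<in>A. a \<in> b} = b" using assms(3)[OF b] by blast
    finally show "(\<Sum>a\<in>A. if a \<in> b then 1 else (0::nat)) = 2" using assms(3)[OF b] by simp
  qed simp
  finally show ?thesis by simp
qed

lemma nbr_path:
  assumes "(y, z) \<in> (erel E)\<^sup>*" "y \<noteq> v"
  shows "((y, z) \<in> (adj_avoid E {v})\<^sup>* \<and> z \<noteq> v) \<or> (\<exists>u. {v, u} \<in> E \<and> (y, u) \<in> (adj_avoid E {v})\<^sup>*)"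
  using assms(1)
proof (induction rule: rtrancl_induct)
  case base
  then show ?case using assms(2) by simp
next
  case (step z w)
  from step.IH show ?case
  proof (elim disjE conjE)
    assume yz: "(y, z) \<in> (adj_avoid E {v})\<^sup>*" and zv: "z \<noteq> v"
    show ?thesis
    proof (cases "w = v")
      case True
      then have "{v, z} \<in> E" using step.hyps(2) by (simp add: insert_commute)
      then show ?thesis using yz by blast
    next
      case False
      then have "(z, w) \<in> adj_avoid E {v}" using step.hyps(2) zv by (simp add: adj_avoid_def)
      then have "(y, w) \<in> (adj_avoid E {v})\<^sup>*" by (rule rtrancl_into_rtrancl[OF yz])
      then show ?thesis using False by simp
    qed
  next
    assume "\<exists>u. {v, u} \<in> E \<and> (y, u) \<in> (adj_avoid E {v})\<^sup>*"
    then show ?thesis by simp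
  qed
qed

lemma nbr:
  assumes t: "is_tree V E" and "y \<in> V" "v \<in> V" "y \<noteq> v"
  shows "\<exists>u. {v, u} \<in> E \<and> (y, u) \<in> (adj_avoid E {v})\<^sup>*"
  using nbr_path[OF tree_conn[OF t assms(2,3)] assms(4)] by simp

lemma three_comp:
  assumes t: "is_tree V E" and dv: "degree E v = 3" and v: "v \<in> V"
    and y: "y1 \<in> V" "y2 \<in> V" "y3 \<in> V" "y \<in> V" "y1 \<noteq> v" "y2 \<noteq> v" "y3 \<noteq> v" "y \<noteq> v"
    and n12: "(y1, y2) \<notin> (adj_avoid E {v})\<^sup>*"
    and n13: "(y1, y3) \<notin> (adj_avoid E {v})\<^sup>*"
    and n23: "(y2, y3) \<notin> (adj_avoid E {v})\<^sup>*"
  shows "(y, y1) \<in> (adj_avoid E {v})\<^sup>* \<or> (y, y2) \<in> (adj_avoid E {v})\<^sup>* \<or> (y, y3) \<in> (adj_avoid E {v})\<^sup>*"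
proof -
  let ?A = "(adj_avoid E {v})\<^sup>*"
  obtain u1 where u1: "{v, u1} \<in> E" "(y1, u1) \<in> ?A" using nbr[OF t y(1) v y(5)] by blast
  obtain u2 where u2: "{v, u2} \<in> E" "(y2, u2) \<in> ?A" using nbr[OF t y(2) v y(6)] by blast
  obtain u3 where u3: "{v, u3} \<in> E" "(y3, u3) \<in> ?A" using nbr[OF t y(3) v y(7)] by blast
  obtain u where u: "{v, u} \<in> E" "(y, u) \<in> ?A" using nbr[OF t y(4) v y(8)] by blast
  have eq: "{v, p} = {v, q} \<Longrightarrow> p = q" for p q by (auto simp: doubleton_eq_iff)
  have conn: "(p, q) \<in> ?A" if "(p, w) \<in> ?A" "(q, w) \<in> ?A" for p q w
  proof -
    have "(w, q) \<in> ?A" using that(2) by (rule avoid_rt_sym)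
    then show ?thesis using that(1) by (rule rtrancl_trans[rotated])
  qed
  have d12: "{v, u1} \<noteq> {v, u2}"
  proof
    assume "{v, u1} = {v, u2}" then have "u1 = u2" by (rule eq)
    then show False using conn[where p=y1 and q=y2 and w=u1] u1 u2 n12 by simp
  qed
  have d13: "{v, u1} \<noteq> {v, u3}"
  proof
    assume "{v, u1} = {v, u3}" then have "u1 = u3" by (rule eq)
    then show False using conn[where p=y1 and q=y3 and w=u1] u1 u3 n13 by simp
  qed
  have d23: "{v, u2} \<noteq> {v, u3}"
  proof
    assume "{v, u2} = {v, u3}" then have "u2 = u3" by (rule eq)
    then show False using conn[where p=y2 and q=y3 and w=u2] u2 u3 n23 by simp
  qed
  let ?N = "{e \<in> E. v \<in> e}"
  have finN: "finite ?N" using tree_finE[OF t] by simp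
  have sub: "{{v, u1}, {v, u2}, {v, u3}} \<subseteq> ?N" using u1 u2 u3 by simp
  have c3: "card {{v, u1}, {v, u2}, {v, u3}} = 3" using d12 d13 d23 by simp
  have "card ?N = 3" using dv by (simp add: degree_def)
  then have "{{v, u1}, {v, u2}, {v, u3}} = ?N" using card_subset_eq[OF finN sub] c3 by simp
  then have "{v, u} \<in> {{v, u1}, {v, u2}, {v, u3}}" using u by simp
  then have "u = u1 \<or> u = u2 \<or> u = u3" using eq by auto
  then show ?thesis
  proof (elim disjE)
    assume "u = u1" then show ?thesis using conn[where p=y and q=y1 and w=u] u u1 by simp
  next
    assume "u = u2" then show ?thesis using conn[where p=y and q=y2 and w=u] u u2 by simp
  next
    assume "u = u3" then show ?thesis using conn[where p=y and q=y3 and w=u] u u3 by simp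
  qed
qed

lemma leaf_iso:
  assumes d: "degree E x = 1" and xv: "{x, v} \<in> E" and xnv: "x \<noteq> v"
    and p: "(x, y) \<in> (adj_avoid E {v})\<^sup>*"
  shows "y = x"
  using p
proof (cases rule: converse_rtranclE)
  case base
  then show ?thesis by simp
next
  case (step w)
  then have xw: "{x, w} \<in> E" "w \<noteq> v" by (auto simp: adj_avoid_def)
  have "card {e \<in> E. x \<in> e} = 1" using d by (simp add: degree_def)
  then obtain s where s: "{e \<in> E. x \<in> e} = {s}" by (rule card_1_singletonE)
  have m1: "{x, w} \<in> {e \<in> E. x \<in> e}" using xw(1) by simp
  have m2: "{x, v} \<in> {e \<in> E. x \<in> e}" using xv by simp
  have "{x, w} = s" using m1 unfolding s by simp
  moreover have "{x, v} = s" using m2 unfolding s by simp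
  ultimately have "{x, w} = {x, v}" by simp
  then have "w = v" using xnv by (auto simp: doubleton_eq_iff)
  then show ?thesis using xw by simp
qed

lemma bpt_tree: "binary_phylo_tree X V E \<Longrightarrow> is_tree V E"
  unfolding binary_phylo_tree_def by simp

lemma bpt_XV: "binary_phylo_tree X V E \<Longrightarrow> X \<subseteq> V"
  unfolding binary_phylo_tree_def by simp

lemma bpt_leaf: "binary_phylo_tree X V E \<Longrightarrow> v \<in> V \<Longrightarrow> v \<in> X \<longleftrightarrow> degree E v = 1"
  unfolding binary_phylo_tree_def by simp

lemma bpt_int: "binary_phylo_tree X V E \<Longrightarrow> v \<in> V - X \<Longrightarrow> degree E v = 3"
  unfolding binary_phylo_tree_def by simp

lemma leaf_nbr:
  assumes b: "binary_phylo_tree X V E" and c3: "card X \<ge> 3" and x: "x \<in> X"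
  shows "\<exists>v. {x, v} \<in> E \<and> v \<in> V - X \<and> x \<noteq> v"
proof -
  have t: "is_tree V E" by (rule bpt_tree[OF b])
  have XV: "X \<subseteq> V" by (rule bpt_XV[OF b])
  have xV: "x \<in> V" using x XV by blast
  have dx: "degree E x = 1" using bpt_leaf[OF b xV] x by simp
  then have "card {e \<in> E. x \<in> e} = 1" by (simp add: degree_def)
  then obtain s where s: "{e \<in> E. x \<in> e} = {s}" by (rule card_1_singletonE)
  then have sE: "s \<in> E" "x \<in> s" by auto
  obtain p q where pq: "s = {p, q}" "p \<noteq> q" "p \<in> V" "q \<in> V" using tree_edge[OF t sE(1)] by blast
  obtain v where v: "s = {x, v}" "x \<noteq> v" "v \<in> V" using pq sE(2) by (auto simp: insert_commute)
  have xvE: "{x, v} \<in> E" using sE v by simp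
  have "v \<notin> X"
  proof
    assume vX: "v \<in> X"
    have dv: "degree E v = 1" using bpt_leaf[OF b v(3)] vX by simp
    have "card (X - {x, v}) \<ge> 1"
    proof -
      have "card (X - {x, v}) = card X - card {x, v}"
        using x vX by (simp add: card_Diff_subset)
      moreover have "card {x, v} = 2" using v by simp
      ultimately show ?thesis using c3 by simp
    qed
    then have "X - {x, v} \<noteq> {}" by (metis card.empty not_one_le_zero)
    then obtain y where y: "y \<in> X" "y \<noteq> x" "y \<noteq> v" by blast
    have yV: "y \<in> V" using y XV by blast
    obtain u where u: "{v, u} \<in> E" "(y, u) \<in> (adj_avoid E {v})\<^sup>*" using nbr[OF t yV v(3) y(3)] by blast
    have "card {e \<in> E. v \<in> e} = 1" using dv by (simp add: degree_def)
    then obtain s' where s': "{e \<in> E. v \<in> e} = {s'}" by (rule card_1_singletonE)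
    have m1: "{v, u} \<in> {e \<in> E. v \<in> e}" using u(1) by simp
    have m2: "{v, x} \<in> {e \<in> E. v \<in> e}" using xvE by (simp add: insert_commute)
    have "{v, u} = s'" using m1 unfolding s' by simp
    moreover have "{v, x} = s'" using m2 unfolding s' by simp
    ultimately have "{v, u} = {v, x}" by simp
    then have "u = x" by (auto simp: doubleton_eq_iff)
    then have "(x, y) \<in> (adj_avoid E {v})\<^sup>*" using u(2) avoid_rt_sym by simp
    then have "y = x" by (rule leaf_iso[OF dx xvE v(2)])
    then show False using y by simp
  qed
  then show ?thesis using xvE v by blast
qed

lemma interior_count:
  assumes b: "binary_phylo_tree X V E"
  shows "card (V - X) + 2 \<le> card X"
proof -
  have t: "is_tree V E" by (rule bpt_tree[OF b])
  have XV: "X \<subseteq> V" by (rule bpt_XV[OF b])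
  have finV: "finite V" using t unfolding is_tree_def by simp
  have finE: "finite E" by (rule tree_finE[OF t])
  have "(\<Sum>v\<in>V. card {e\<in>E. v \<in> e}) = 2 * card E"
  proof (rule double_count[OF finV finE])
    fix e assume "e \<in> E"
    then obtain p q where "e = {p, q}" "p \<noteq> q" "p \<in> V" "q \<in> V" using tree_edge[OF t] by blast
    then show "e \<subseteq> V \<and> card e = 2" by simp
  qed
  then have hs: "(\<Sum>v\<in>V. degree E v) = 2 * card E" by (simp add: degree_def)
  have VU: "V = X \<union> (V - X)" using XV by blast
  have "(\<Sum>v\<in>V. degree E v) = (\<Sum>v\<in>X. degree E v) + (\<Sum>v\<in>V - X. degree E v)"
    using sum.subset_diff[OF XV finV, of "degree E"] by simp
  also have "(\<Sum>v\<in>X. degree E v) = (\<Sum>v\<in>X. 1)"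
    using bpt_leaf[OF b] XV by (intro sum.cong) auto
  also have "(\<Sum>v\<in>V - X. degree E v) = (\<Sum>v\<in>V - X. 3)"
    using bpt_int[OF b] by (intro sum.cong) auto
  finally have "card X + 3 * card (V - X) = 2 * card E" using hs by simp
  moreover have "card E + 1 \<le> card V" by (rule edge_count[OF t])
  moreover have "card (V - X) = card V - card X"
    using finV XV by (simp add: card_Diff_subset finite_subset)
  moreover have "card X \<le> card V" using finV XV by (rule card_mono)
  ultimately show ?thesis by linarith
qed

lemma pairs_fin: "finite X \<Longrightarrow> T \<subseteq> pairs X \<Longrightarrow> finite T"
proof -
  assume "finite X" "T \<subseteq> pairs X"
  moreover have "pairs X \<subseteq> Pow X" by (auto simp: pairs_def)
  ultimately show "finite T" by (meson finite_Pow_iff finite_subset)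
qed

lemma two_pairs:
  assumes "{x, p} \<in> T" "{x, q} \<in> T" "p \<noteq> q" "finite T"
  shows "2 \<le> multiplicity T x"
proof -
  have ne: "{x, p} \<noteq> {x, q}" using assms(3) by (auto simp: doubleton_eq_iff)
  have "{{x, p}, {x, q}} \<subseteq> {r \<in> T. x \<in> r}" using assms(1,2) by simp
  then have "card {{x, p}, {x, q}} \<le> card {r \<in> T. x \<in> r}"
    using assms(4) by (intro card_mono) simp_all
  moreover have "card {{x, p}, {x, q}} = 2" using ne by simp
  ultimately show ?thesis by (simp add: multiplicity_def)
qed

lemma pair_ne: "{a, b} \<in> T \<Longrightarrow> T \<subseteq> pairs X \<Longrightarrow> a \<noteq> b"
proof
  assume "{a, b} \<in> T" "T \<subseteq> pairs X" "a = b"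
  then have "card {a, b} = 2" by (auto simp: pairs_def)
  then show False using \<open>a = b\<close> by simp
qed

lemma mult_ge2:
  assumes b: "binary_phylo_tree X V E" and c3: "card X \<ge> 3" and finX: "finite X"
    and cov: "triplet_cover X V E T" and x: "x \<in> X"
  shows "2 \<le> multiplicity T x"
proof -
  have t: "is_tree V E" by (rule bpt_tree[OF b])
  have XV: "X \<subseteq> V" by (rule bpt_XV[OF b])
  have sub: "T \<subseteq> pairs X" using cov by (simp add: triplet_cover_def)
  have finT: "finite T" by (rule pairs_fin[OF finX sub])
  obtain v where v: "{x, v} \<in> E" "v \<in> V - X" "x \<noteq> v" using leaf_nbr[OF b c3 x] by blast
  have "v \<in> interior X V" using v by (simp add: interior_def)
  then obtain a b c where abc: "a \<in> X" "b \<in> X" "c \<in> X" "supports E T v a b c"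
    using cov by (auto simp: triplet_cover_def)
  let ?A = "(adj_avoid E {v})\<^sup>*"
  have s: "a \<noteq> v" "b \<noteq> v" "c \<noteq> v" "(a, b) \<notin> ?A" "(a, c) \<notin> ?A" "(b, c) \<notin> ?A"
    "{a, b} \<in> T" "{a, c} \<in> T" "{b, c} \<in> T"
    using abc(4) by (simp_all add: supports_def connected_avoid_def)
  have dv: "degree E v = 3" using bpt_int[OF b v(2)] .
  have xV: "x \<in> V" using x XV by blast
  have dx: "degree E x = 1" using bpt_leaf[OF b xV] x by simp
  have "(x, a) \<in> ?A \<or> (x, b) \<in> ?A \<or> (x, c) \<in> ?A"
    using three_comp[OF t dv _ _ _ _ xV s(1-3) v(3) s(4-6)] v(2) abc(1-3) XV by blast
  then have "a = x \<or> b = x \<or> c = x" using leaf_iso[OF dx v(1) v(3)] by blast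
  then show ?thesis
  proof (elim disjE)
    assume "a = x"
    then show ?thesis using two_pairs[of x b T c] s pair_ne[OF s(9) sub] finT by simp
  next
    assume "b = x"
    then show ?thesis using two_pairs[of x a T c] s pair_ne[OF s(8) sub] finT
      by (simp add: insert_commute)
  next
    assume "c = x"
    then show ?thesis using two_pairs[of x a T b] s pair_ne[OF s(7) sub] finT
      by (simp add: insert_commute)
  qed
qed

lemma card3: "card {p, q, s} \<le> 3"
proof -
  have "{p, q, s} = set [p, q, s]" by simp
  then have "card {p, q, s} \<le> length [p, q, s]" using card_length by metis
  moreover have "length [p, q, s] = 3" by simp
  ultimately show ?thesis by linarith
qed

lemma minimal_card:
  assumes finX: "finite X" and finV: "finite V" and m: "minimal_triplet_cover X V E T"
  shows "card T \<le> 3 * card (V - X)"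
proof -
  have cov: "triplet_cover X V E T" using m by (simp add: minimal_triplet_cover_def)
  have sub: "T \<subseteq> pairs X" using cov by (simp add: triplet_cover_def)
  define S where "S w = (SOME S. \<exists>a b c. a \<in> X \<and> b \<in> X \<and> c \<in> X \<and> supports E T w a b c
      \<and> S = {{a, b}, {a, c}, {b, c}})" for w
  have S: "\<exists>a b c. a \<in> X \<and> b \<in> X \<and> c \<in> X \<and> supports E T w a b c
      \<and> S w = {{a, b}, {a, c}, {b, c}}" if w: "w \<in> V - X" for w
  proof -
    have "w \<in> interior X V" using w by (simp add: interior_def)
    then obtain a b c where "a \<in> X" "b \<in> X" "c \<in> X" "supports E T w a b c"
      using cov by (auto simp: triplet_cover_def)
    then have "\<exists>S. \<exists>a b c. a \<in> X \<and> b \<in> X \<and> c \<in> X \<and> supports E T w a b c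
      \<and> S = {{a, b}, {a, c}, {b, c}}" by blast
    then show ?thesis unfolding S_def by (rule someI_ex)
  qed
  have cover: "T \<subseteq> (\<Union>w\<in>V - X. S w)"
  proof
    fix p assume p: "p \<in> T"
    have "\<not> triplet_cover X V E (T - {p})" using m p by (simp add: minimal_triplet_cover_def)
    moreover have "T - {p} \<subseteq> pairs X" using sub by blast
    ultimately have "\<not> (\<forall>v\<in>interior X V. \<exists>a\<in>X. \<exists>b\<in>X. \<exists>c\<in>X. supports E (T - {p}) v a b c)"
      unfolding triplet_cover_def by blast
    then obtain w where w0: "w \<in> interior X V"
      and ns: "\<not> (\<exists>a\<in>X. \<exists>b\<in>X. \<exists>c\<in>X. supports E (T - {p}) w a b c)"
      by blast
    have w: "w \<in> V - X" using w0 by (simp add: interior_def)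
    obtain a b c where abc: "a \<in> X" "b \<in> X" "c \<in> X" "supports E T w a b c"
      "S w = {{a, b}, {a, c}, {b, c}}" using S[OF w] by blast
    have "p \<in> S w"
    proof (rule ccontr)
      assume "p \<notin> S w"
      then have "{a, b} \<noteq> p" "{a, c} \<noteq> p" "{b, c} \<noteq> p" using abc(5) by auto
      then have "supports E (T - {p}) w a b c" using abc(4) unfolding supports_def by simp
      then have "\<exists>a\<in>X. \<exists>b\<in>X. \<exists>c\<in>X. supports E (T - {p}) w a b c" using abc(1-3) by blast
      then show False using ns by simp
    qed
    then show "p \<in> (\<Union>w\<in>V - X. S w)" using w by blast
  qed
  have finS: "finite (S w)" if wI: "w \<in> V - X" for w
  proof -
    obtain a b c where "S w = {{a, b}, {a, c}, {b, c}}" using S[OF wI] by blast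
    then show ?thesis by simp
  qed
  have finI: "finite (V - X)" using finV by simp
  have "card T \<le> card (\<Union>w\<in>V - X. S w)"
    using finite_UN_I[OF finI finS] cover by (rule card_mono)
  also have "\<dots> \<le> (\<Sum>w\<in>V - X. card (S w))" using finI by (rule card_UN_le)
  also have "\<dots> \<le> (\<Sum>w\<in>V - X. 3)"
  proof (rule sum_mono)
    fix w assume "w \<in> V - X"
    then obtain a b c where "S w = {{a, b}, {a, c}, {b, c}}" using S by meson
    then show "card (S w) \<le> 3" by (simp only: card3)
  qed
  finally show ?thesis by simp
qed

lemma avoid_trans2:
  "(r, a) \<in> (adj_avoid E W)\<^sup>* \<Longrightarrow> (r, b) \<in> (adj_avoid E W)\<^sup>*
   \<Longrightarrow> (a, b) \<in> (adj_avoid E W)\<^sup>* \<and> (b, a) \<in> (adj_avoid E W)\<^sup>*"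
proof -
  assume h1: "(r, a) \<in> (adj_avoid E W)\<^sup>*" and h2: "(r, b) \<in> (adj_avoid E W)\<^sup>*"
  have h3: "(a, r) \<in> (adj_avoid E W)\<^sup>*" using h1 by (rule avoid_rt_sym)
  have h4: "(b, r) \<in> (adj_avoid E W)\<^sup>*" using h2 by (rule avoid_rt_sym)
  show ?thesis using rtrancl_trans[OF h3 h2] rtrancl_trans[OF h4 h1] by simp
qed

lemma minimum_card:
  assumes b: "binary_phylo_tree X V E" and finX: "finite X" and c3: "card X \<ge> 3"
    and m: "minimum_triplet_cover X V E T"
  shows "card T + 3 \<le> 2 * card X"
proof -
  have cov: "triplet_cover X V E T" using m by (simp add: minimum_triplet_cover_def)
  have sub: "T \<subseteq> pairs X" using cov by (simp add: triplet_cover_def)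
  have t: "is_tree V E" by (rule bpt_tree[OF b])
  have XV: "X \<subseteq> V" by (rule bpt_XV[OF b])
  have finV: "finite V" using t unfolding is_tree_def by simp
  have "X \<noteq> {}" using c3 by auto
  then obtain r where r: "r \<in> X" by blast
  define Q where "Q w a b \<longleftrightarrow> a \<in> X \<and> b \<in> X \<and> a \<noteq> w \<and> b \<noteq> w
     \<and> (r, a) \<notin> (adj_avoid E {w})\<^sup>* \<and> (r, b) \<notin> (adj_avoid E {w})\<^sup>*
     \<and> (a, b) \<notin> (adj_avoid E {w})\<^sup>* \<and> {a, b} \<in> T" for w a b
  have Qex: "\<exists>a b. Q w a b" if w: "w \<in> V - X" for w
  proof -
    have "w \<in> interior X V" using w by (simp add: interior_def)
    then obtain a b c where abc: "a \<in> X" "b \<in> X" "c \<in> X" "supports E T w a b c"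
      using cov by (auto simp: triplet_cover_def)
    let ?A = "(adj_avoid E {w})\<^sup>*"
    have s: "a \<noteq> w" "b \<noteq> w" "c \<noteq> w" "(a, b) \<notin> ?A" "(a, c) \<notin> ?A" "(b, c) \<notin> ?A"
      "{a, b} \<in> T" "{a, c} \<in> T" "{b, c} \<in> T"
      using abc(4) by (simp_all add: supports_def connected_avoid_def)
    have dw: "degree E w = 3" using bpt_int[OF b w] .
    have rw: "r \<noteq> w" "r \<in> V" using r w XV by auto
    have aV: "a \<in> V" "b \<in> V" "c \<in> V" "w \<in> V" using abc(1-3) XV w by auto
    have "(r, a) \<in> ?A \<or> (r, b) \<in> ?A \<or> (r, c) \<in> ?A"
      by (rule three_comp[OF t dw aV(4) aV(1-3) rw(2) s(1-3) rw(1) s(4-6)])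
    then show ?thesis
    proof (elim disjE)
      assume ra: "(r, a) \<in> ?A"
      have "(r, b) \<notin> ?A"
      proof
        assume h: "(r, b) \<in> ?A" show False using avoid_trans2[OF ra h] s(4) by simp
      qed
      moreover have "(r, c) \<notin> ?A"
      proof
        assume h: "(r, c) \<in> ?A" show False using avoid_trans2[OF ra h] s(5) by simp
      qed
      ultimately have "Q w b c" unfolding Q_def using abc(2,3) s(2,3,6,9) by simp
      then show ?thesis by blast
    next
      assume rb: "(r, b) \<in> ?A"
      have "(r, a) \<notin> ?A"
      proof
        assume h: "(r, a) \<in> ?A" show False using avoid_trans2[OF rb h] s(4) by simp
      qed
      moreover have "(r, c) \<notin> ?A"
      proof
        assume h: "(r, c) \<in> ?A" show False using avoid_trans2[OF rb h] s(6) by simp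
      qed
      ultimately have "Q w a c" unfolding Q_def using abc(1,3) s(1,3,5,8) by simp
      then show ?thesis by blast
    next
      assume rc: "(r, c) \<in> ?A"
      have "(r, a) \<notin> ?A"
      proof
        assume h: "(r, a) \<in> ?A" show False using avoid_trans2[OF rc h] s(5) by simp
      qed
      moreover have "(r, b) \<notin> ?A"
      proof
        assume h: "(r, b) \<in> ?A" show False using avoid_trans2[OF rc h] s(6) by simp
      qed
      ultimately have "Q w a b" unfolding Q_def using abc(1,2) s(1,2,4,7) by simp
      then show ?thesis by blast
    qed
  qed
  define g where "g w = (SOME pq. Q w (fst pq) (snd pq))" for w
  have g: "Q w (fst (g w)) (snd (g w))" if w: "w \<in> V - X" for w
  proof -
    obtain a b where "Q w a b" using Qex[OF w] by blast
    then have "\<exists>pq. Q w (fst pq) (snd pq)" by (intro exI[of _ "(a, b)"]) simp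
    then show ?thesis unfolding g_def by (rule someI_ex)
  qed
  define T0 where "T0 = (\<lambda>x. {r, x}) ` (X - {r}) \<union> (\<lambda>w. {fst (g w), snd (g w)}) ` (V - X)"
  have cov0: "triplet_cover X V E T0"
    unfolding triplet_cover_def
  proof
    show "T0 \<subseteq> pairs X"
    proof
      fix p assume "p \<in> T0"
      then consider x where "x \<in> X - {r}" "p = {r, x}"
        | w where "w \<in> V - X" "p = {fst (g w), snd (g w)}"
        unfolding T0_def by blast
      then show "p \<in> pairs X"
      proof cases
        case 1
        then show ?thesis using r by (auto simp: pairs_def)
      next
        case 2
        then have "p \<in> T" using g[of w] by (simp add: Q_def)
        then show ?thesis using sub by blast
      qed
    qed
  next
    show "\<forall>v\<in>interior X V. \<exists>a\<in>X. \<exists>b\<in>X. \<exists>c\<in>X. supports E T0 v a b c"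
    proof
      fix v assume "v \<in> interior X V"
      then have v: "v \<in> V - X" by (simp add: interior_def)
      define a where "a = fst (g v)"
      define c where "c = snd (g v)"
      have q: "Q v a c" using g[OF v] a_def c_def by simp
      have qs: "a \<in> X" "c \<in> X" "a \<noteq> v" "c \<noteq> v" "(r, a) \<notin> (adj_avoid E {v})\<^sup>*"
        "(r, c) \<notin> (adj_avoid E {v})\<^sup>*" "(a, c) \<notin> (adj_avoid E {v})\<^sup>*"
        using q unfolding Q_def by simp_all
      have ar: "a \<noteq> r" using qs(5) by auto
      have cr: "c \<noteq> r" using qs(6) by auto
      have "{r, a} \<in> T0" using qs(1) ar unfolding T0_def by blast
      moreover have "{r, c} \<in> T0" using qs(2) cr unfolding T0_def by blast
      moreover have "{a, c} \<in> T0" using v unfolding T0_def a_def c_def by blast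
      moreover have "r \<noteq> v" using r v by blast
      ultimately have "supports E T0 v r a c"
        using qs unfolding supports_def connected_avoid_def by simp
      then show "\<exists>a\<in>X. \<exists>b\<in>X. \<exists>c\<in>X. supports E T0 v a b c" using r qs(1,2) by blast
    qed
  qed
  have "card T \<le> card T0" using m cov0 by (simp add: minimum_triplet_cover_def)
  also have "\<dots> \<le> card ((\<lambda>x. {r, x}) ` (X - {r})) + card ((\<lambda>w. {fst (g w), snd (g w)}) ` (V - X))"
    unfolding T0_def by (rule card_Un_le)
  also have "\<dots> \<le> card (X - {r}) + card (V - X)"
    by (intro add_mono card_image_le) (simp_all add: finX finV)
  finally have "card T \<le> card (X - {r}) + card (V - X)" .
  moreover have "card (X - {r}) = card X - 1" using r finX by simp
  moreover have "card (V - X) + 2 \<le> card X" by (rule interior_count[OF b])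
  ultimately show ?thesis using c3 by linarith
qed

lemma min_mult_le:
  assumes "finite X" "X \<noteq> {}"
  shows "card X * min_multiplicity X T \<le> (\<Sum>x\<in>X. multiplicity T x)"
proof -
  have "\<forall>x\<in>X. min_multiplicity X T \<le> multiplicity T x"
    unfolding min_multiplicity_def using assms by simp
  then show ?thesis using sum_bounded_below[of X "min_multiplicity X T" "multiplicity T"] by simp
qed

lemma min_mult_ge:
  assumes "finite X" "X \<noteq> {}" "\<forall>x\<in>X. 2 \<le> multiplicity T x"
  shows "2 \<le> min_multiplicity X T"
  unfolding min_multiplicity_def using assms by simp

lemma sum_mult:
  assumes "finite X" "T \<subseteq> pairs X"
  shows "(\<Sum>x\<in>X. multiplicity T x) = 2 * card T"
  unfolding multiplicity_def
proof (rule double_count[OF assms(1) pairs_fin[OF assms]])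
  fix p assume "p \<in> T"
  then show "p \<subseteq> X \<and> card p = 2" using assms(2) by (auto simp: pairs_def)
qed

theorem proposition2:
  fixes X V :: "'v set" and E \<T> :: "'v set set"
  assumes "finite X" and "card X \<ge> 3" and "binary_phylo_tree X V E"
  shows "(minimal_triplet_cover X V E \<T> \<longrightarrow>
            2 \<le> min_multiplicity X \<T> \<and> min_multiplicity X \<T> \<le> 5)
       \<and> (minimum_triplet_cover X V E \<T> \<longrightarrow>
            2 \<le> min_multiplicity X \<T> \<and> min_multiplicity X \<T> \<le> 3)"
proof -
  have finX: "finite X" and c3: "card X \<ge> 3" and b: "binary_phylo_tree X V E" using assms by auto
  have ne: "X \<noteq> {}" using c3 by auto
  have t: "is_tree V E" by (rule bpt_tree[OF b])
  have finV: "finite V" using t unfolding is_tree_def by simp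
  have ic: "card (V - X) + 2 \<le> card X" by (rule interior_count[OF b])
  have low: "2 \<le> min_multiplicity X \<T>" if cov: "triplet_cover X V E \<T>"
    using min_mult_ge[OF finX ne] mult_ge2[OF b c3 finX cov] by blast
  have up: "card X * min_multiplicity X \<T> \<le> 2 * card \<T>" if cov: "triplet_cover X V E \<T>"
  proof -
    have "\<T> \<subseteq> pairs X" using cov by (simp add: triplet_cover_def)
    then show ?thesis using min_mult_le[OF finX ne, of \<T>] sum_mult[OF finX] by simp
  qed
  show ?thesis
  proof (intro conjI impI)
    assume m: "minimal_triplet_cover X V E \<T>"
    then have cov: "triplet_cover X V E \<T>" by (simp add: minimal_triplet_cover_def)
    show "2 \<le> min_multiplicity X \<T>" by (rule low[OF cov])
    show "min_multiplicity X \<T> \<le> 5"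
    proof (rule ccontr)
      assume "\<not> ?thesis"
      then have "card X * 6 \<le> card X * min_multiplicity X \<T>" by simp
      moreover have "card \<T> \<le> 3 * card (V - X)" by (rule minimal_card[OF finX finV m])
      ultimately show False using up[OF cov] ic by linarith
    qed
  next
    assume m: "minimum_triplet_cover X V E \<T>"
    then have cov: "triplet_cover X V E \<T>" by (simp add: minimum_triplet_cover_def)
    show "2 \<le> min_multiplicity X \<T>" by (rule low[OF cov])
    show "min_multiplicity X \<T> \<le> 3"
    proof (rule ccontr)
      assume "\<not> ?thesis"
      then have "card X * 4 \<le> card X * min_multiplicity X \<T>" by simp
      moreover have "card \<T> + 3 \<le> 2 * card X" by (rule minimum_card[OF b finX c3 m])
      ultimately show False using up[OF cov] by linarith
    qed
  qed
qed

end
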